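(* Let $K\subseteq L$ be an algebraic field extension, let $A$ be a PvMD with quotient field $K$, and let $B\supseteq A$ be an integrally closed essential domain with quotient field $L$. Suppose that $B$ admits an essential representation $\mathcal V$ such that for every $V\in\mathcal V$ the center $\mathfrak m_V\cap A$ of $V$ in $A$ (where $\mathfrak m_V$ is the maximal ideal of $V$) is a $t$-ideal of $A$. Then $B$ is a PvMD.
   Context: All rings are commutative with identity. For an integral domain $D$ with quotient field $F$ and nonzero fractional ideal $I$: $(D:I)=\{x\in F:xI\subseteq D\}$, $I^v=(D:(D:I))$, $I^t=\bigcup\{J^v:J\subseteq I \text{ finitely generated}\}$; $I$ is a $t$-ideal if $I=(0)$ or $I=I^t$; $t$-maximal ideals are $t$-ideals maximal among proper $t$-ideals. $D$ is a PvMD if $D_{\mathfrak m}$ is a valuation domain for all $t$-maximal $\mathfrak m$. A valuation overring of $D$ is essential if it equals $D_{\mathfrak p}$ for a prime $\mathfrak p$ of $D$; an essential representation of $D$ is a family of essential valuation overrings with intersection $D$; $D$ is essential if it has one. *)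

theory Defs
  imports "HOL-Computational_Algebra.Polynomial"
begin

text \<open>Convention: all domains are realised as subrings of an ambient field type 'a.
  A domain D with quotient field F is a subring D of the subfield F with
  F = {a/b | a, b in D, b nonzero}.\<close>

definition subring :: "'a::field set \<Rightarrow> bool" where
  "subring D \<longleftrightarrow> 0 \<in> D \<and> 1 \<in> D \<and> (\<forall>x\<in>D. \<forall>y\<in>D. x + y \<in> D \<and> x - y \<in> D \<and> x * y \<in> D)"

definition subfield :: "'a::field set \<Rightarrow> bool" where
  "subfield F \<longleftrightarrow> subring F \<and> (\<forall>x\<in>F. x \<noteq> 0 \<longrightarrow> inverse x \<in> F)"

definition quotient_field :: "'a::field set \<Rightarrow> 'a set \<Rightarrow> bool" where
  "quotient_field D F \<longleftrightarrow> subring D \<and> subfield F \<and>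
     F = {a / b | a b. a \<in> D \<and> b \<in> D \<and> b \<noteq> 0}"

definition algebraic_ext :: "'a::field set \<Rightarrow> 'a set \<Rightarrow> bool" where
  "algebraic_ext K L \<longleftrightarrow> subfield K \<and> subfield L \<and> K \<subseteq> L \<and>
     (\<forall>x\<in>L. \<exists>p. p \<noteq> 0 \<and> (\<forall>i. coeff p i \<in> K) \<and> poly p x = 0)"

definition integrally_closed :: "'a::field set \<Rightarrow> 'a set \<Rightarrow> bool" where
  "integrally_closed D F \<longleftrightarrow> (\<forall>x\<in>F. (\<exists>p. lead_coeff p = 1 \<and> (\<forall>i. coeff p i \<in> D) \<and> poly p x = 0) \<longrightarrow> x \<in> D)"

definition ideal_of :: "'a::field set \<Rightarrow> 'a set \<Rightarrow> bool" where
  "ideal_of D I \<longleftrightarrow> I \<subseteq> D \<and> 0 \<in> I \<and> (\<forall>x\<in>I. \<forall>y\<in>I. x + y \<in> I) \<and> (\<forall>d\<in>D. \<forall>x\<in>I. d * x \<in> I)"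

definition prime_ideal_of :: "'a::field set \<Rightarrow> 'a set \<Rightarrow> bool" where
  "prime_ideal_of D P \<longleftrightarrow> ideal_of D P \<and> P \<noteq> D \<and> (\<forall>x\<in>D. \<forall>y\<in>D. x * y \<in> P \<longrightarrow> x \<in> P \<or> y \<in> P)"

definition frac_ideal :: "'a::field set \<Rightarrow> 'a set \<Rightarrow> 'a set \<Rightarrow> bool" where
  "frac_ideal D F I \<longleftrightarrow> I \<subseteq> F \<and> 0 \<in> I \<and> (\<forall>x\<in>I. \<forall>y\<in>I. x + y \<in> I) \<and>
     (\<forall>d\<in>D. \<forall>x\<in>I. d * x \<in> I) \<and> (\<exists>d\<in>D. d \<noteq> 0 \<and> (\<forall>x\<in>I. d * x \<in> D))"

definition colon :: "'a::field set \<Rightarrow> 'a set \<Rightarrow> 'a set \<Rightarrow> 'a set" where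
  "colon D F I = {x \<in> F. \<forall>y\<in>I. x * y \<in> D}"

definition v_closure :: "'a::field set \<Rightarrow> 'a set \<Rightarrow> 'a set \<Rightarrow> 'a set" where
  "v_closure D F I = colon D F (colon D F I)"

definition dspan :: "'a::field set \<Rightarrow> 'a set \<Rightarrow> 'a set" where
  "dspan D S = {y. \<exists>c. (\<forall>s\<in>S. c s \<in> D) \<and> y = (\<Sum>s\<in>S. c s * s)}"

definition t_closure :: "'a::field set \<Rightarrow> 'a set \<Rightarrow> 'a set \<Rightarrow> 'a set" where
  "t_closure D F I = \<Union>{v_closure D F (dspan D S) | S. finite S \<and> S \<noteq> {} \<and> S \<subseteq> I - {0}}"

definition t_ideal :: "'a::field set \<Rightarrow> 'a set \<Rightarrow> 'a set \<Rightarrow> bool" where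
  "t_ideal D F I \<longleftrightarrow> I = {0} \<or> (frac_ideal D F I \<and> I \<noteq> {0} \<and> t_closure D F I = I)"

definition t_maximal :: "'a::field set \<Rightarrow> 'a set \<Rightarrow> 'a set \<Rightarrow> bool" where
  "t_maximal D F M \<longleftrightarrow> ideal_of D M \<and> M \<noteq> D \<and> t_ideal D F M \<and>
     (\<forall>J. ideal_of D J \<and> J \<noteq> D \<and> t_ideal D F J \<and> M \<subseteq> J \<longrightarrow> J = M)"

definition localization :: "'a::field set \<Rightarrow> 'a set \<Rightarrow> 'a set" where
  "localization D P = {a / s | a s. a \<in> D \<and> s \<in> D \<and> s \<notin> P}"

definition valuation_domain :: "'a::field set \<Rightarrow> 'a set \<Rightarrow> bool" where
  "valuation_domain V F \<longleftrightarrow> subring V \<and> V \<subseteq> F \<and>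
     (\<forall>x\<in>F. x \<noteq> 0 \<longrightarrow> x \<in> V \<or> inverse x \<in> V)"

definition PvMD :: "'a::field set \<Rightarrow> 'a set \<Rightarrow> bool" where
  "PvMD D F \<longleftrightarrow> quotient_field D F \<and>
     (\<forall>M. t_maximal D F M \<longrightarrow> valuation_domain (localization D M) F)"

definition valuation_overring :: "'a::field set \<Rightarrow> 'a set \<Rightarrow> 'a set \<Rightarrow> bool" where
  "valuation_overring D F V \<longleftrightarrow> D \<subseteq> V \<and> valuation_domain V F"

definition essential_valuation_overring :: "'a::field set \<Rightarrow> 'a set \<Rightarrow> 'a set \<Rightarrow> bool" where
  "essential_valuation_overring D F V \<longleftrightarrow> valuation_overring D F V \<and>
     (\<exists>P. prime_ideal_of D P \<and> V = localization D P)"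

text \<open>Intersection taken inside F (so the empty family has intersection F).\<close>
definition essential_representation :: "'a::field set \<Rightarrow> 'a set \<Rightarrow> 'a set set \<Rightarrow> bool" where
  "essential_representation D F \<V> \<longleftrightarrow> (\<forall>V\<in>\<V>. essential_valuation_overring D F V) \<and>
     F \<inter> \<Inter>\<V> = D"

definition essential_domain :: "'a::field set \<Rightarrow> 'a set \<Rightarrow> bool" where
  "essential_domain D F \<longleftrightarrow> quotient_field D F \<and> (\<exists>\<V>. essential_representation D F \<V>)"

definition max_ideal_val :: "'a::field set \<Rightarrow> 'a set" where
  "max_ideal_val V = {x \<in> V. x = 0 \<or> inverse x \<notin> V}"

end

theory Submission
  imports Defs
begin


lemma sr: assumes "subring D"
  shows "0 \<in> D" "1 \<in> D" "\<And>x y. x \<in> D \<Longrightarrow> y \<in> D \<Longrightarrow> x + y \<in> D"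
    "\<And>x y. x \<in> D \<Longrightarrow> y \<in> D \<Longrightarrow> x - y \<in> D"
    "\<And>x y. x \<in> D \<Longrightarrow> y \<in> D \<Longrightarrow> x * y \<in> D"
  using assms unfolding subring_def by auto

lemma sr_uminus: "subring D \<Longrightarrow> x \<in> D \<Longrightarrow> - x \<in> D"
  using sr[of D] by (metis diff_0)

lemma sr_power: "subring D \<Longrightarrow> x \<in> D \<Longrightarrow> x ^ n \<in> D"
  by (induction n) (auto intro: sr)

lemma sr_sum: "subring D \<Longrightarrow> (\<And>i. i \<in> S \<Longrightarrow> f i \<in> D) \<Longrightarrow> sum f S \<in> D"
proof (induction S rule: infinite_finite_induct)
  case (infinite A) then show ?case by (simp add: sr)
next
  case empty then show ?case by (simp add: sr)
next
  case (insert x F) then show ?case by (simp add: sr)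
qed

lemma sf_inv: "subfield F \<Longrightarrow> x \<in> F \<Longrightarrow> inverse x \<in> F"
  unfolding subfield_def by (cases "x = 0") (auto simp: sr)

lemma sf_sr: "subfield F \<Longrightarrow> subring F" unfolding subfield_def by auto

lemma sf_div: "subfield F \<Longrightarrow> x \<in> F \<Longrightarrow> y \<in> F \<Longrightarrow> x / y \<in> F"
  by (simp add: divide_inverse sf_inv sf_sr sr(5))

lemma qf_sr: "quotient_field D F \<Longrightarrow> subring D" unfolding quotient_field_def by auto
lemma qf_sf: "quotient_field D F \<Longrightarrow> subfield F" unfolding quotient_field_def by auto
lemma qf_sub: assumes "quotient_field D F" shows "D \<subseteq> F"
proof
  fix x assume "x \<in> D"
  then have "x = x / 1" "1 \<in> D" "(1::'a) \<noteq> 0" using qf_sr[OF assms] sr by auto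
  then show "x \<in> F" using assms \<open>x \<in> D\<close> unfolding quotient_field_def by blast
qed
lemma qf_elem: "quotient_field D F \<Longrightarrow> x \<in> F \<Longrightarrow> \<exists>a b. a \<in> D \<and> b \<in> D \<and> b \<noteq> 0 \<and> x = a / b"
  unfolding quotient_field_def by blast

definition cc :: "'a::field set \<Rightarrow> 'a set \<Rightarrow> 'a set \<Rightarrow> 'a set" where
  "cc D F S = colon D F (colon D F S)"

lemma colon_anti: "S \<subseteq> S' \<Longrightarrow> colon D F S' \<subseteq> colon D F S"
  unfolding colon_def by auto

lemma colon_F: "colon D F S \<subseteq> F" unfolding colon_def by auto

lemma cc_mono: "S \<subseteq> S' \<Longrightarrow> cc D F S \<subseteq> cc D F S'"
  unfolding cc_def by (intro colon_anti)

lemma cc_ext: "S \<subseteq> F \<Longrightarrow> S \<subseteq> cc D F S"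
  unfolding cc_def colon_def by (auto simp: mult.commute)

lemma colon3: "S \<subseteq> F \<Longrightarrow> colon D F (cc D F S) = colon D F S"
proof
  assume "S \<subseteq> F"
  show "colon D F (cc D F S) \<subseteq> colon D F S" using cc_ext[OF \<open>S \<subseteq> F\<close>] by (rule colon_anti)
  show "colon D F S \<subseteq> colon D F (cc D F S)" using cc_ext[OF colon_F, of D F S] unfolding cc_def .
qed

lemma cc_idem: "S \<subseteq> F \<Longrightarrow> cc D F (cc D F S) = cc D F S"
  using colon3 unfolding cc_def by metis

lemma cc_F: "cc D F S \<subseteq> F" unfolding cc_def by (rule colon_F)

lemma one_colon: "quotient_field D F \<Longrightarrow> S \<subseteq> D \<Longrightarrow> 1 \<in> colon D F S"
  unfolding colon_def using qf_sub[of D F] sr(2)[OF qf_sr] by auto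

lemma cc_D: assumes "quotient_field D F" "S \<subseteq> D" shows "cc D F S \<subseteq> D"
  using one_colon[OF assms] unfolding cc_def colon_def by force

lemma cc_add: assumes "quotient_field D F" "x \<in> cc D F S" "y \<in> cc D F S" shows "x + y \<in> cc D F S"
  using assms sr(3)[OF qf_sr[OF assms(1)]] sr(3)[OF sf_sr[OF qf_sf[OF assms(1)]]]
  unfolding cc_def colon_def by (auto simp: distrib_right)

lemma cc_mult: assumes "quotient_field D F" "d \<in> D" "x \<in> cc D F S" shows "d * x \<in> cc D F S"
proof -
  have "d \<in> F" using assms qf_sub by blast
  then show ?thesis
  using assms sr(5)[OF qf_sr[OF assms(1)]] sr(5)[OF sf_sr[OF qf_sf[OF assms(1)]]]
  unfolding cc_def colon_def by (auto simp: mult.assoc)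
qed

lemma cc_zero: assumes "quotient_field D F" shows "0 \<in> cc D F S"
  using assms sr(1)[OF qf_sr[OF assms(1)]] sr(1)[OF sf_sr[OF qf_sf[OF assms(1)]]]
  unfolding cc_def colon_def by auto

lemma one_cc_iff: "1 \<in> cc D F S \<longleftrightarrow> 1 \<in> F \<and> (\<forall>y\<in>F. (\<forall>s\<in>S. y * s \<in> D) \<longrightarrow> y \<in> D)"
  unfolding cc_def colon_def by (auto simp: mult.commute)

lemma colon_dspan: assumes "quotient_field D F" "finite S" "S \<subseteq> F"
  shows "colon D F (dspan D S) = colon D F S"
proof
  have "S \<subseteq> dspan D S"
  proof
    fix s assume "s \<in> S"
    have "(\<Sum>t\<in>S. (if t = s then 1 else 0) * t) = s" using \<open>s \<in> S\<close> assms(2)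
      proof -
      have eq: "(\<lambda>t. (if t = s then 1 else 0) * t) = (\<lambda>t. if t = s then s else 0)" by auto
      then show ?thesis using \<open>s \<in> S\<close> assms(2) by (subst eq) (simp add: sum.delta)
    qed
    then show "s \<in> dspan D S" unfolding dspan_def
      using sr(1,2)[OF qf_sr[OF assms(1)]]
      by (intro CollectI exI[of _ "\<lambda>t. if t = s then 1 else 0"]) auto
  qed
  then show "colon D F (dspan D S) \<subseteq> colon D F S" by (rule colon_anti)
  show "colon D F S \<subseteq> colon D F (dspan D S)"
  proof
    fix x assume x: "x \<in> colon D F S"
    have "x * y \<in> D" if "y \<in> dspan D S" for y
    proof -
      obtain c where c: "\<forall>s\<in>S. c s \<in> D" "y = (\<Sum>s\<in>S. c s * s)" using \<open>y \<in> dspan D S\<close> unfolding dspan_def by blast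
      have "x * y = (\<Sum>s\<in>S. c s * (x * s))" by (simp add: c(2) sum_distrib_left ac_simps)
      also have "\<dots> \<in> D"
        by (rule sr_sum[OF qf_sr[OF assms(1)]]) (use c x sr(5)[OF qf_sr[OF assms(1)]] in \<open>unfold colon_def, blast\<close>)
      finally show ?thesis .
    qed
    then show "x \<in> colon D F (dspan D S)" using x unfolding colon_def by auto
  qed
qed

lemma v_dspan: "quotient_field D F \<Longrightarrow> finite S \<Longrightarrow> S \<subseteq> F \<Longrightarrow> v_closure D F (dspan D S) = cc D F S"
  unfolding v_closure_def cc_def by (simp add: colon_dspan)

lemma tcl_iff: assumes "quotient_field D F" "I \<subseteq> F"
  shows "x \<in> t_closure D F I \<longleftrightarrow> (\<exists>S. finite S \<and> S \<noteq> {} \<and> S \<subseteq> I - {0} \<and> x \<in> cc D F S)"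
proof -
  have "\<And>S. S \<subseteq> I - {0} \<Longrightarrow> finite S \<Longrightarrow> v_closure D F (dspan D S) = cc D F S"
    using assms by (intro v_dspan) auto
  then show ?thesis unfolding t_closure_def by blast
qed



lemma ideal_sub: "ideal_of D I \<Longrightarrow> I \<subseteq> D" unfolding ideal_of_def by auto

lemma ideal_one: assumes "ideal_of D I" "1 \<in> I" shows "I = D"
  using assms unfolding ideal_of_def by (metis mult.right_neutral subsetI subset_antisym)

lemma tc_sub_D: assumes "quotient_field D F" "ideal_of D I" shows "t_closure D F I \<subseteq> D"
proof
  fix x assume "x \<in> t_closure D F I"
  moreover have "I \<subseteq> F" using ideal_sub[OF assms(2)] qf_sub[OF assms(1)] by blast
  ultimately obtain S where S: "finite S" "S \<subseteq> I - {0}" "x \<in> cc D F S" using tcl_iff[OF assms(1), of I x] by blast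
  have "S \<subseteq> D" using S(2) ideal_sub[OF assms(2)] by blast
  then show "x \<in> D" using cc_D[OF assms(1), of S] S(3) by blast
qed

lemma tc_ext: assumes "quotient_field D F" "ideal_of D I" "I \<noteq> {0}" shows "I \<subseteq> t_closure D F I"
proof
  have IF: "I \<subseteq> F" using ideal_sub[OF assms(2)] qf_sub[OF assms(1)] by blast
  fix x assume x: "x \<in> I"
  obtain z where z: "z \<in> I" "z \<noteq> 0" using assms(3) assms(2) unfolding ideal_of_def by blast
  show "x \<in> t_closure D F I"
  proof (cases "x = 0")
    case True
    then show ?thesis using z cc_zero[OF assms(1), of "{z}"] tcl_iff[OF assms(1) IF]
      by (intro iffD2[OF tcl_iff[OF assms(1) IF]] exI[of _ "{z}"]) auto
  next
    case False
    then show ?thesis using x cc_ext[of "{x}" F D] IF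
      by (intro iffD2[OF tcl_iff[OF assms(1) IF]] exI[of _ "{x}"]) auto
  qed
qed

lemma tc_ideal: assumes "quotient_field D F" "ideal_of D I" "I \<noteq> {0}" shows "ideal_of D (t_closure D F I)"
proof -
  have IF: "I \<subseteq> F" using ideal_sub[OF assms(2)] qf_sub[OF assms(1)] by blast
  have "0 \<in> t_closure D F I" using tc_ext[OF assms] assms(2) unfolding ideal_of_def by blast
  moreover have "x + y \<in> t_closure D F I" if hx: "x \<in> t_closure D F I" and hy: "y \<in> t_closure D F I" for x y
  proof -
    obtain S1 where S1: "finite S1" "S1 \<noteq> {}" "S1 \<subseteq> I - {0}" "x \<in> cc D F S1" using iffD1[OF tcl_iff[OF assms(1) IF] hx] by blast
    obtain S2 where S2: "finite S2" "S2 \<noteq> {}" "S2 \<subseteq> I - {0}" "y \<in> cc D F S2" using iffD1[OF tcl_iff[OF assms(1) IF] hy] by blast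
    have "x \<in> cc D F (S1 \<union> S2)" "y \<in> cc D F (S1 \<union> S2)" using S1 S2 cc_mono[of _ "S1 \<union> S2" D F] by blast+
    then have "x + y \<in> cc D F (S1 \<union> S2)" by (rule cc_add[OF assms(1)])
    then show ?thesis using S1 S2 by (intro iffD2[OF tcl_iff[OF assms(1) IF]] exI[of _ "S1 \<union> S2"]) auto
  qed
  moreover have "d * x \<in> t_closure D F I" if hd: "d \<in> D" and hx: "x \<in> t_closure D F I" for d x
  proof -
    obtain S1 where S1: "finite S1" "S1 \<noteq> {}" "S1 \<subseteq> I - {0}" "x \<in> cc D F S1" using iffD1[OF tcl_iff[OF assms(1) IF] hx] by blast
    then have "d * x \<in> cc D F S1" using cc_mult[OF assms(1) hd] by blast
    then show ?thesis using S1 by (intro iffD2[OF tcl_iff[OF assms(1) IF]] exI[of _ S1]) auto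
  qed
  ultimately show ?thesis using tc_sub_D[OF assms(1,2)] unfolding ideal_of_def by simp
qed

lemma tc_idem: assumes "quotient_field D F" "I \<subseteq> F" shows "t_closure D F (t_closure D F I) \<subseteq> t_closure D F I"
proof
  have TF: "t_closure D F I \<subseteq> F" unfolding t_closure_def using v_closure_def colon_F by blast
  fix x assume "x \<in> t_closure D F (t_closure D F I)"
  then obtain S where S: "finite S" "S \<noteq> {}" "S \<subseteq> t_closure D F I - {0}" "x \<in> cc D F S" using iffD1[OF tcl_iff[OF assms(1) TF]] by blast
  have "\<forall>s\<in>S. \<exists>U. finite U \<and> U \<noteq> {} \<and> U \<subseteq> I - {0} \<and> s \<in> cc D F U" using S(3) tcl_iff[OF assms] by (meson DiffE subset_iff)
  then obtain f where f: "\<forall>s\<in>S. finite (f s) \<and> f s \<noteq> {} \<and> f s \<subseteq> I - {0} \<and> s \<in> cc D F (f s)" by (rule bchoice[elim_format]) blast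
  define U where "U = \<Union>(f ` S)"
  have U: "finite U" "U \<noteq> {}" "U \<subseteq> I - {0}" using f S unfolding U_def by auto
  have "S \<subseteq> cc D F U" using f cc_mono[of _ U D F] unfolding U_def by blast
  then have "cc D F S \<subseteq> cc D F (cc D F U)" by (rule cc_mono)
  also have "\<dots> = cc D F U" using U(3) assms(2) by (intro cc_idem) blast
  finally have "cc D F S \<subseteq> cc D F U" .
  then show "x \<in> t_closure D F I" using S(4) U by (intro iffD2[OF tcl_iff[OF assms]] exI[of _ U]) auto
qed

lemma tc_tideal: assumes "quotient_field D F" "ideal_of D I" "I \<noteq> {0}"
  shows "t_ideal D F (t_closure D F I)"
proof -
  have IF: "I \<subseteq> F" using ideal_sub[OF assms(2)] qf_sub[OF assms(1)] by blast
  let ?T = "t_closure D F I"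
  have id: "ideal_of D ?T" by (rule tc_ideal[OF assms])
  have ne: "?T \<noteq> {0}" using tc_ext[OF assms] assms(3) assms(2) unfolding ideal_of_def by blast
  have "t_closure D F ?T = ?T" using tc_idem[OF assms(1) IF] tc_ext[OF assms(1) id ne] by blast
  moreover have "frac_ideal D F ?T" using id qf_sub[OF assms(1)] sr(2)[OF qf_sr[OF assms(1)]]
    unfolding frac_ideal_def ideal_of_def by (intro conjI bexI[of _ 1]) auto
  ultimately show ?thesis unfolding t_ideal_def using ne by blast
qed

lemma tideal_closed: assumes "t_ideal D F I" "I \<noteq> {0}" shows "t_closure D F I = I"
  using assms unfolding t_ideal_def by auto

lemma exists_tmax: assumes qf: "quotient_field D F" and I: "ideal_of D I" "I \<noteq> {0}" "1 \<notin> t_closure D F I"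
  shows "\<exists>M. t_maximal D F M \<and> I \<subseteq> M"
proof -
  define C where "C = {J. ideal_of D J \<and> I \<subseteq> J \<and> 1 \<notin> t_closure D F J}"
  have Cmem: "J \<in> C \<longleftrightarrow> ideal_of D J \<and> I \<subseteq> J \<and> 1 \<notin> t_closure D F J" for J by (simp add: C_def)
  have "C \<noteq> {}" using I Cmem by blast
  moreover have "\<Union>Ch \<in> C" if ne: "Ch \<noteq> {}" and ch: "subset.chain C Ch" for Ch
  proof -
    have ChC: "Ch \<subseteq> C" and tot: "\<forall>X\<in>Ch. \<forall>Y\<in>Ch. X \<subseteq> Y \<or> Y \<subseteq> X" using that(2) unfolding subset_chain_def by auto
    have idls: "ideal_of D X" if "X \<in> Ch" for X using that ChC Cmem by blast
    have sub: "I \<subseteq> \<Union>Ch" using that(1) ChC Cmem by blast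
    have idl: "ideal_of D (\<Union>Ch)"
      unfolding ideal_of_def
    proof (intro conjI ballI)
      show "\<Union>Ch \<subseteq> D" using idls ideal_sub by blast
      show "0 \<in> \<Union>Ch" using idls that(1) unfolding ideal_of_def by blast
      fix x y assume "x \<in> \<Union>Ch" "y \<in> \<Union>Ch"
      then obtain X Y where XY: "X \<in> Ch" "Y \<in> Ch" "x \<in> X" "y \<in> Y" by blast
      then have "x \<in> X \<union> Y" "y \<in> X \<union> Y" "X \<union> Y \<in> Ch" using tot by (metis Un_iff sup.absorb1 sup.absorb2)+
      then have "x + y \<in> X \<union> Y" using idls[of "X \<union> Y"] unfolding ideal_of_def by blast
      then show "x + y \<in> \<Union>Ch" using \<open>X \<union> Y \<in> Ch\<close> by blast
    next
      fix d x assume "d \<in> D" "x \<in> \<Union>Ch"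
      then obtain X where "X \<in> Ch" "x \<in> X" by blast
      then have "d * x \<in> X" using idls[of X] \<open>d \<in> D\<close> unfolding ideal_of_def by blast
      then show "d * x \<in> \<Union>Ch" using \<open>X \<in> Ch\<close> by blast
    qed
    have UF: "\<Union>Ch \<subseteq> F" using ideal_sub[OF idl] qf_sub[OF qf] by blast
    have "1 \<notin> t_closure D F (\<Union>Ch)"
    proof
      assume "1 \<in> t_closure D F (\<Union>Ch)"
      then obtain S where S: "finite S" "S \<noteq> {}" "S \<subseteq> \<Union>Ch - {0}" "1 \<in> cc D F S" using iffD1[OF tcl_iff[OF qf UF]] by blast
      have "S \<subseteq> \<Union>Ch" using S(3) by blast
      then obtain X where X: "X \<in> Ch" "S \<subseteq> X" using finite_subset_Union_chain[OF S(1) _ ne ch] by blast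
      have XF: "X \<subseteq> F" using idls[OF X(1)] ideal_sub qf_sub[OF qf] by blast
      have "1 \<in> t_closure D F X" using S X by (intro iffD2[OF tcl_iff[OF qf XF]] exI[of _ S]) auto
      moreover have "1 \<notin> t_closure D F X" using X(1) ChC Cmem by blast
      ultimately show False by blast
    qed
    then show ?thesis using idl sub Cmem by blast
  qed
  ultimately obtain M where M: "M \<in> C" "\<And>X. X \<in> C \<Longrightarrow> M \<subseteq> X \<Longrightarrow> X = M" using subset_Zorn_nonempty[of C] by blast
  have Mi: "ideal_of D M" "I \<subseteq> M" "1 \<notin> t_closure D F M" using M(1) Cmem by auto
  have Mne: "M \<noteq> {0}" using Mi(2) I(2) I(1) unfolding ideal_of_def by blast
  have MF: "M \<subseteq> F" using ideal_sub[OF Mi(1)] qf_sub[OF qf] by blast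
  have MT: "M \<subseteq> t_closure D F M" by (rule tc_ext[OF qf Mi(1) Mne])
  have "t_closure D F (t_closure D F M) \<subseteq> t_closure D F M" by (rule tc_idem[OF qf MF])
  then have "1 \<notin> t_closure D F (t_closure D F M)" using Mi(3) by blast
  then have Tin: "t_closure D F M \<in> C" using tc_ideal[OF qf Mi(1) Mne] MT Mi(2) Cmem by blast
  have TM: "t_closure D F M = M" using M(2)[OF Tin MT] .
  have "M \<noteq> D" using Mi(3) MT sr(2)[OF qf_sr[OF qf]] by blast
  moreover have "t_ideal D F M" using tc_tideal[OF qf Mi(1) Mne] TM by simp
  moreover have "J = M" if "ideal_of D J" "J \<noteq> D" "t_ideal D F J" "M \<subseteq> J" for J
  proof -
    have "J \<noteq> {0}" using that(4) Mne Mi(1) unfolding ideal_of_def by blast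
    then have "t_closure D F J = J" using tideal_closed that(3) by blast
    then have "1 \<notin> t_closure D F J" using ideal_one[OF that(1)] that(2) by auto
    then have "J \<in> C" using that(1,4) Mi(2) Cmem by blast
    then show ?thesis using M(2) that(4) by blast
  qed
  ultimately show ?thesis unfolding t_maximal_def using Mi by blast
qed



lemma ideal_ops: assumes "ideal_of D I"
  shows "0 \<in> I" "\<And>x y. x \<in> I \<Longrightarrow> y \<in> I \<Longrightarrow> x + y \<in> I" "\<And>d x. d \<in> D \<Longrightarrow> x \<in> I \<Longrightarrow> d * x \<in> I"
    "I \<subseteq> D"
  using assms unfolding ideal_of_def by auto

lemma tmax_gen: assumes qf: "quotient_field D F" and M: "t_maximal D F M" "M \<noteq> {0}"
  and a: "a \<in> D" "a \<notin> M"
  shows "\<exists>S. finite S \<and> S \<noteq> {} \<and> S \<subseteq> {m + a * d | m d. m \<in> M \<and> d \<in> D} - {0} \<and> 1 \<in> cc D F S"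
proof -
  let ?I = "{m + a * d | m d. m \<in> M \<and> d \<in> D}"
  have R: "subring D" using qf_sr[OF qf] .
  have Mi: "ideal_of D M" "M \<noteq> D" "t_ideal D F M"
    and Mmax: "\<And>J. ideal_of D J \<Longrightarrow> J \<noteq> D \<Longrightarrow> t_ideal D F J \<Longrightarrow> M \<subseteq> J \<Longrightarrow> J = M"
    using M(1) unfolding t_maximal_def by auto
  note mo = ideal_ops[OF Mi(1)]
  have MI: "M \<subseteq> ?I"
  proof
    fix m assume "m \<in> M" then show "m \<in> ?I" using sr(1)[OF R] by (intro CollectI exI[of _ m] exI[of _ 0]) auto
  qed
  have aI: "a \<in> ?I" using mo(1) sr(2)[OF R] by (intro CollectI exI[of _ 0] exI[of _ 1]) auto
  have idl: "ideal_of D ?I" unfolding ideal_of_def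
  proof (intro conjI ballI)
    show "?I \<subseteq> D"
    proof
      fix z assume "z \<in> ?I"
      then obtain m d where "z = m + a * d" "m \<in> M" "d \<in> D" by blast
      then show "z \<in> D" using mo(4) a(1) sr(3)[OF R] sr(5)[OF R] by blast
    qed
    show "0 \<in> ?I" using MI mo(1) by blast
  next
    fix x y assume "x \<in> ?I" "y \<in> ?I"
    then obtain m d m' d' where "x = m + a * d" "y = m' + a * d'" "m \<in> M" "d \<in> D" "m' \<in> M" "d' \<in> D" by blast
    then show "x + y \<in> ?I" using mo(2) sr(3)[OF R]
      by (intro CollectI exI[of _ "m + m'"] exI[of _ "d + d'"]) (auto simp: algebra_simps)
  next
    fix e x assume "e \<in> D" "x \<in> ?I"
    then obtain m d where "x = m + a * d" "m \<in> M" "d \<in> D" by blast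
    then show "e * x \<in> ?I" using mo(3) sr(5)[OF R] \<open>e \<in> D\<close>
      by (intro CollectI exI[of _ "e * m"] exI[of _ "e * d"]) (auto simp: algebra_simps)
  qed
  have Ine: "?I \<noteq> {0}" using MI M(2) mo(1) by blast
  have IF: "?I \<subseteq> F" using ideal_sub[OF idl] qf_sub[OF qf] by blast
  have "1 \<in> t_closure D F ?I"
  proof (rule ccontr)
    assume n1: "1 \<notin> t_closure D F ?I"
    let ?T = "t_closure D F ?I"
    have "?T = M"
    proof (rule Mmax)
      show "ideal_of D ?T" by (rule tc_ideal[OF qf idl Ine])
      show "?T \<noteq> D" using n1 sr(2)[OF R] by blast
      show "t_ideal D F ?T" by (rule tc_tideal[OF qf idl Ine])
      show "M \<subseteq> ?T" using MI tc_ext[OF qf idl Ine] by blast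
    qed
    then show False using aI tc_ext[OF qf idl Ine] a(2) by blast
  qed
  then show ?thesis using iffD1[OF tcl_iff[OF qf IF]] by blast
qed

lemma tmax_prime: assumes qf: "quotient_field D F" and M: "t_maximal D F M"
  shows "prime_ideal_of D M"
proof -
  have R: "subring D" using qf_sr[OF qf] .
  have Mi: "ideal_of D M" "M \<noteq> D" "t_ideal D F M" using M unfolding t_maximal_def by auto
  note mo = ideal_ops[OF Mi(1)]
  have "x \<in> M \<or> y \<in> M" if xy: "x \<in> D" "y \<in> D" "x * y \<in> M" for x y
  proof (cases "M = {0}")
    case True then show ?thesis using xy by auto
  next
    case Mne: False
    show ?thesis
    proof (rule ccontr)
      assume "\<not> (x \<in> M \<or> y \<in> M)"
      then have nx: "x \<notin> M" and ny: "y \<notin> M" by auto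
      obtain Sx where Sx: "finite Sx" "Sx \<noteq> {}" "Sx \<subseteq> {m + x * d | m d. m \<in> M \<and> d \<in> D} - {0}" "1 \<in> cc D F Sx"
        using tmax_gen[OF qf M Mne xy(1) nx] by blast
      obtain Sy where Sy: "finite Sy" "Sy \<noteq> {}" "Sy \<subseteq> {m + y * d | m d. m \<in> M \<and> d \<in> D} - {0}" "1 \<in> cc D F Sy"
        using tmax_gen[OF qf M Mne xy(2) ny] by blast
      define P where "P = (\<lambda>(s, t). s * t) ` (Sx \<times> Sy)"
      have Pf: "finite P" "P \<noteq> {}" using Sx Sy unfolding P_def by auto
      have PM: "P \<subseteq> M - {0}"
      proof
        fix p assume "p \<in> P"
        then obtain s t where st: "s \<in> Sx" "t \<in> Sy" "p = s * t" unfolding P_def by auto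
        obtain m d where md: "s = m + x * d" "m \<in> M" "d \<in> D" "s \<noteq> 0" using st(1) Sx(3) by blast
        obtain m' d' where md': "t = m' + y * d'" "m' \<in> M" "d' \<in> D" "t \<noteq> 0" using st(2) Sy(3) by blast
        have tD: "t \<in> D" using md' mo(4) sr(3)[OF R] sr(5)[OF R] xy by blast
        have "p = t * m + (x * d) * m' + (d * d') * (x * y)" using st md md' by (simp add: algebra_simps)
        moreover have "t * m \<in> M" using mo(3)[OF tD md(2)] .
        moreover have "(x * d) * m' \<in> M" using mo(3)[OF sr(5)[OF R xy(1) md(3)] md'(2)] .
        moreover have "(d * d') * (x * y) \<in> M" using mo(3)[OF sr(5)[OF R md(3) md'(3)] xy(3)] .
        ultimately have "p \<in> M" using mo(2) by metis
        moreover have "p \<noteq> 0" using st md(4) md'(4) by simp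
        ultimately show "p \<in> M - {0}" by blast
      qed
      have SxF: "1 \<in> F \<and> (\<forall>z\<in>F. (\<forall>s\<in>Sx. z * s \<in> D) \<longrightarrow> z \<in> D)" using Sx(4) one_cc_iff by blast
      have SyF: "1 \<in> F \<and> (\<forall>z\<in>F. (\<forall>s\<in>Sy. z * s \<in> D) \<longrightarrow> z \<in> D)" using Sy(4) one_cc_iff by blast
      have DF: "D \<subseteq> F" by (rule qf_sub[OF qf])
      have SyD: "Sy \<subseteq> D"
      proof
        fix t assume "t \<in> Sy"
        then obtain m' d' where md': "t = m' + y * d'" "m' \<in> M" "d' \<in> D" using Sy(3) by blast
        then show "t \<in> D" using mo(4) sr(3)[OF R] sr(5)[OF R] xy by blast
      qed
      have "1 \<in> cc D F P" unfolding one_cc_iff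
      proof (intro conjI ballI impI)
        show "1 \<in> F" using SxF by blast
        fix z assume z: "z \<in> F" "\<forall>p\<in>P. z * p \<in> D"
        have "z * t \<in> D" if "t \<in> Sy" for t
        proof -
          have "z * t \<in> F" using z(1) that SyD DF sr(5)[OF sf_sr[OF qf_sf[OF qf]]] by blast
          moreover have "\<forall>s\<in>Sx. (z * t) * s \<in> D"
          proof
            fix s assume "s \<in> Sx"
            then have "s * t \<in> P" using that unfolding P_def by blast
            then show "(z * t) * s \<in> D" using z(2) by (metis mult.commute mult.left_commute)
          qed
          ultimately show ?thesis using SxF by blast
        qed
        then show "z \<in> D" using SyF z(1) by blast
      qed
      then have "1 \<in> t_closure D F M"
        using Pf PM ideal_sub[OF Mi(1)] DF by (intro iffD2[OF tcl_iff[OF qf]] exI[of _ P]) auto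
      then have "1 \<in> M" using tideal_closed[OF Mi(3) Mne] by simp
      then show False using ideal_one[OF Mi(1)] Mi(2) by blast
    qed
  qed
  then show ?thesis unfolding prime_ideal_of_def using Mi by blast
qed



locale locB =
  fixes B L M :: "'a::field set"
  assumes qf: "quotient_field B L" and pr: "prime_ideal_of B M"
begin

abbreviation "R \<equiv> localization B M"

lemma RB: "subring B" using qf_sr[OF qf] .
lemma BL: "B \<subseteq> L" using qf_sub[OF qf] .
lemma Mi: "ideal_of B M" "M \<noteq> B" "\<And>x y. x \<in> B \<Longrightarrow> y \<in> B \<Longrightarrow> x * y \<in> M \<Longrightarrow> x \<in> M \<or> y \<in> M"
  using pr unfolding prime_ideal_of_def by auto
lemma zM: "0 \<in> M" using ideal_ops(1)[OF Mi(1)] .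
lemma oneM: "1 \<notin> M" using ideal_one[OF Mi(1)] Mi(2) by blast
lemma MB: "M \<subseteq> B" using ideal_sub[OF Mi(1)] .

lemma mulM: "s \<in> B \<Longrightarrow> t \<in> B \<Longrightarrow> s \<notin> M \<Longrightarrow> t \<notin> M \<Longrightarrow> s * t \<notin> M"
  using Mi(3) by blast

lemma Rmem: "x \<in> R \<longleftrightarrow> (\<exists>a s. a \<in> B \<and> s \<in> B \<and> s \<notin> M \<and> x = a / s)"
  unfolding localization_def by blast

lemma nz: "s \<notin> M \<Longrightarrow> s \<noteq> 0" using zM by auto

lemma R_sr: "subring R"
  unfolding subring_def
proof (intro conjI ballI)
  show "0 \<in> R" using sr(1,2)[OF RB] oneM unfolding Rmem by (intro exI[of _ 0] exI[of _ 1]) auto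
  show "1 \<in> R" using sr(1,2)[OF RB] oneM unfolding Rmem by (intro exI[of _ 1] exI[of _ 1]) auto
  fix x y assume "x \<in> R" "y \<in> R"
  then obtain a s b t where ab: "a \<in> B" "s \<in> B" "s \<notin> M" "x = a / s" "b \<in> B" "t \<in> B" "t \<notin> M" "y = b / t"
    unfolding Rmem by blast
  have st: "s * t \<in> B" "s * t \<notin> M" using ab sr(5)[OF RB] mulM by auto
  have s0: "s \<noteq> 0" "t \<noteq> 0" using ab nz by auto
  have "x + y = (a * t + b * s) / (s * t)" using ab s0 by (simp add: field_simps)
  moreover have "a * t + b * s \<in> B" using ab sr(3,5)[OF RB] by blast
  ultimately show "x + y \<in> R" using st unfolding Rmem by blast
  have "x - y = (a * t - b * s) / (s * t)" using ab s0 by (simp add: field_simps)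
  moreover have "a * t - b * s \<in> B" using ab sr(4,5)[OF RB] by blast
  ultimately show "x - y \<in> R" using st unfolding Rmem by blast
  have "x * y = (a * b) / (s * t)" using ab s0 by (simp add: field_simps)
  moreover have "a * b \<in> B" using ab sr(5)[OF RB] by blast
  ultimately show "x * y \<in> R" using st unfolding Rmem by blast
qed

lemma R_L: "R \<subseteq> L"
proof
  fix x assume "x \<in> R"
  then obtain a s where "a \<in> B" "s \<in> B" "x = a / s" unfolding Rmem by blast
  then show "x \<in> L" using BL sf_div[OF qf_sf[OF qf]] by blast
qed

lemma B_R: "B \<subseteq> R"
proof
  fix x assume "x \<in> B" then show "x \<in> R" using sr(2)[OF RB] oneM unfolding Rmem by (intro exI[of _ x] exI[of _ 1]) auto
qed

definition lunit where "lunit x \<longleftrightarrow> x \<in> R \<and> x \<noteq> 0 \<and> inverse x \<in> R"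

lemma unit_char: assumes "a \<in> B" "s \<in> B" "s \<notin> M" shows "lunit (a / s) \<longleftrightarrow> a \<notin> M"
proof
  assume "a \<notin> M"
  then have "a \<noteq> 0" using nz by blast
  moreover have "s \<noteq> 0" using nz assms by blast
  moreover have "a / s \<in> R" unfolding Rmem using assms by blast
  moreover have "inverse (a / s) = s / a" by simp
  moreover have "s / a \<in> R" unfolding Rmem using assms \<open>a \<notin> M\<close> MB by blast
  ultimately show "lunit (a / s)" unfolding lunit_def by simp
next
  assume u: "lunit (a / s)"
  then obtain b t where bt: "b \<in> B" "t \<in> B" "t \<notin> M" "inverse (a / s) = b / t" unfolding lunit_def Rmem by blast
  have "a \<noteq> 0" using u unfolding lunit_def by auto
  have s0: "s \<noteq> 0" "t \<noteq> 0" using nz assms bt by auto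
  have "s / a = b / t" using bt(4) by simp
  then have "s * t = a * b" using s0 \<open>a \<noteq> 0\<close> by (simp add: field_simps)
  show "a \<notin> M"
  proof
    assume "a \<in> M"
    then have "b * a \<in> M" using ideal_ops(3)[OF Mi(1) bt(1)] by blast
    then have "s * t \<in> M" using \<open>s * t = a * b\<close> by (simp add: mult.commute)
    then show False using mulM assms bt by blast
  qed
qed

lemma nonunit_add: assumes "x \<in> R" "\<not> lunit x" "y \<in> R" "\<not> lunit y" shows "\<not> lunit (x + y)"
proof -
  obtain a s b t where ab: "a \<in> B" "s \<in> B" "s \<notin> M" "x = a / s" "b \<in> B" "t \<in> B" "t \<notin> M" "y = b / t"
    using assms unfolding Rmem by blast
  have aM: "a \<in> M" "b \<in> M" using unit_char ab assms by blast+
  have st: "s * t \<in> B" "s * t \<notin> M" using ab sr(5)[OF RB] mulM by auto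
  have s0: "s \<noteq> 0" "t \<noteq> 0" using ab nz by auto
  have "x + y = (t * a + s * b) / (s * t)" using ab s0 by (simp add: field_simps)
  moreover have "t * a + s * b \<in> M" using ideal_ops[OF Mi(1)] aM ab by blast
  moreover have "t * a + s * b \<in> B" using MB calculation(2) by blast
  ultimately show ?thesis using unit_char st by simp
qed

lemma unit_neg: "lunit x \<Longrightarrow> lunit (- x)"
  unfolding lunit_def using sr_uminus[OF R_sr] by (simp add: inverse_minus_eq)

lemma unit_add: assumes "lunit x" "y \<in> R" "\<not> lunit (x + y)" shows "lunit y"
proof (rule ccontr)
  assume "\<not> lunit y"
  have "x + y \<in> R" using assms sr(3)[OF R_sr] unfolding lunit_def by blast
  have "\<not> lunit (- y)" using \<open>\<not> lunit y\<close> unit_neg by fastforce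
  have "- y \<in> R" using assms(2) sr_uminus[OF R_sr] by blast
  have "\<not> lunit ((x + y) + (- y))" using nonunit_add[OF \<open>x + y \<in> R\<close> assms(3) \<open>- y \<in> R\<close> \<open>\<not> lunit (- y)\<close>] .
  then show False using assms(1) by simp
qed

lemma common_denom: "(\<forall>i<(n::nat). e i \<in> R) \<Longrightarrow> \<exists>s. s \<in> B \<and> s \<notin> M \<and> (\<forall>i<n. s * e i \<in> B)"
proof (induction n)
  case 0 then show ?case using sr(2)[OF RB] oneM by auto
next
  case (Suc n)
  then obtain s where s: "s \<in> B" "s \<notin> M" "\<forall>i<n. s * e i \<in> B" by auto
  obtain a t where at: "a \<in> B" "t \<in> B" "t \<notin> M" "e n = a / t" using Suc.prems unfolding Rmem by blast
  have "s * t * e i \<in> B" if "i < Suc n" for i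
  proof (cases "i = n")
    case True
    then have eq: "s * t * e i = s * a" using at nz[OF at(3)] by simp
    have "s * a \<in> B" using sr(5)[OF RB] s at by simp
    then show ?thesis by (simp only: eq)
  next
    case False
    then have eq: "s * t * e i = t * (s * e i)" by (simp add: ac_simps)
    have "i < n" using False that by simp
    then have "t * (s * e i) \<in> B" using sr(5)[OF RB] s at by simp
    then show ?thesis by (simp only: eq)
  qed
  then show ?case using s at sr(5)[OF RB] mulM by (intro exI[of _ "s * t"]) auto
qed

lemma integral_R: assumes ic: "integrally_closed B L" and n: "n \<ge> 1" and e: "\<forall>i<n. e i \<in> R" and w: "w \<in> L"
  and eq: "w ^ n + (\<Sum>i<n. e i * w ^ i) = 0"
  shows "w \<in> R"
proof -
  obtain s where s: "s \<in> B" "s \<notin> M" "\<forall>i<n. s * e i \<in> B" using common_denom[OF e] by blast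
  have s0: "s \<noteq> 0" using nz s by auto
  define f where "f i = s ^ (n - i) * e i" for i
  define z where "z = s * w"
  have fB: "f i \<in> B" if "i < n" for i
  proof -
    have "n - i = Suc (n - i - 1)" using that by simp
    then have "f i = s ^ (n - i - 1) * (s * e i)" unfolding f_def by (metis mult.assoc power_Suc2)
    then show ?thesis using sr(5)[OF RB] sr_power[OF RB] s that by simp
  qed
  have zeq: "z ^ n + (\<Sum>i<n. f i * z ^ i) = 0"
  proof -
    have "f i * z ^ i = s ^ n * (e i * w ^ i)" if "i < n" for i
    proof -
      have "s ^ (n - i) * s ^ i = s ^ n" using that by (simp add: power_add[symmetric])
      then show ?thesis unfolding f_def z_def by (simp add: power_mult_distrib)
    qed
    then have "(\<Sum>i<n. f i * z ^ i) = s ^ n * (\<Sum>i<n. e i * w ^ i)" by (simp add: sum_distrib_left)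
    moreover have "z ^ n = s ^ n * w ^ n" unfolding z_def by (simp add: power_mult_distrib)
    ultimately have "z ^ n + (\<Sum>i<n. f i * z ^ i) = s ^ n * (w ^ n + (\<Sum>i<n. e i * w ^ i))" by (simp add: distrib_left)
    then show ?thesis using eq by simp
  qed
  define p where "p = monom 1 n + (\<Sum>i<n. monom (f i) i)"
  have cp: "coeff p j = (if j = n then 1 else 0) + (\<Sum>i<n. if i = j then f i else 0)" for j
    unfolding p_def by (simp add: coeff_sum)
  have cp2: "coeff p j = (if j = n then 1 else if j < n then f j else 0)" for j
    unfolding cp by (auto simp: sum.delta)
  have dp: "degree p = n"
  proof (rule antisym)
    show "degree p \<le> n" by (rule degree_le) (simp add: cp2)
    show "n \<le> degree p" by (rule le_degree) (simp add: cp2)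
  qed
  have "lead_coeff p = 1" using dp cp2 by simp
  moreover have "\<forall>i. coeff p i \<in> B" using cp2 fB sr(1,2)[OF RB] by simp
  moreover have "poly p z = 0" unfolding p_def using zeq by (simp add: poly_sum poly_monom)
  moreover have "z \<in> L" unfolding z_def using w s BL sr(5)[OF sf_sr[OF qf_sf[OF qf]]] by blast
  ultimately have "z \<in> B" using ic unfolding integrally_closed_def by blast
  moreover have "w = z / s" unfolding z_def using s0 by simp
  ultimately show ?thesis using s unfolding Rmem by blast
qed

end



context locB begin

lemma local_root: assumes ic: "integrally_closed B L" and u: "u \<in> L"
  shows "(\<forall>i\<le>n. c i \<in> R) \<Longrightarrow> (\<exists>i\<le>n. lunit (c i)) \<Longrightarrow> (\<Sum>i\<le>n. c i * u ^ i) = 0 \<Longrightarrow> u \<in> R \<or> inverse u \<in> R"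
proof (induction n arbitrary: c)
  case 0
  then have "c 0 = 0" by simp
  then show ?case using 0 unfolding lunit_def by auto
next
  case (Suc m)
  define cn where "cn = c (Suc m)"
  define w where "w = cn * u"
  have cR: "c i \<in> R" if "i \<le> Suc m" for i using Suc.prems(1) that by blast
  have cnR: "cn \<in> R" unfolding cn_def using cR by simp
  have wL: "w \<in> L" unfolding w_def using cnR R_L u sr(5)[OF sf_sr[OF qf_sf[OF qf]]] by blast
  have sumS: "(\<Sum>i\<le>Suc m. c i * u ^ i) = (\<Sum>i<Suc m. c i * u ^ i) + cn * u ^ Suc m"
    unfolding cn_def by (simp add: lessThan_Suc_atMost[symmetric])
  have wR: "w \<in> R"
  proof (rule integral_R[OF ic _ _ wL, of "Suc m" "\<lambda>i. c i * cn ^ (m - i)"])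
    show "1 \<le> Suc m" by simp
    show "\<forall>i<Suc m. c i * cn ^ (m - i) \<in> R" using cR cnR sr(5)[OF R_sr] sr_power[OF R_sr] by simp
    have t: "c i * cn ^ (m - i) * w ^ i = cn ^ m * (c i * u ^ i)" if "i < Suc m" for i
    proof -
      have "cn ^ (m - i) * cn ^ i = cn ^ m" using that by (simp add: power_add[symmetric])
      then show ?thesis unfolding w_def by (simp add: power_mult_distrib ac_simps)
    qed
    have "(\<Sum>i<Suc m. c i * cn ^ (m - i) * w ^ i) = cn ^ m * (\<Sum>i<Suc m. c i * u ^ i)"
      unfolding sum_distrib_left by (rule sum.cong[OF refl]) (use t in blast)
    moreover have "w ^ Suc m = cn ^ m * (cn * u ^ Suc m)" unfolding w_def by (simp add: power_mult_distrib ac_simps)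
    ultimately have "w ^ Suc m + (\<Sum>i<Suc m. c i * cn ^ (m - i) * w ^ i) = cn ^ m * (\<Sum>i\<le>Suc m. c i * u ^ i)"
      unfolding sumS by (simp add: distrib_left)
    then show "w ^ Suc m + (\<Sum>i<Suc m. c i * cn ^ (m - i) * w ^ i) = 0" using Suc.prems(3) by simp
  qed
  show ?case
  proof (cases "lunit cn")
    case True
    then have "u = w * inverse cn" unfolding w_def lunit_def by simp
    then show ?thesis using wR True sr(5)[OF R_sr] unfolding lunit_def by simp
  next
    case cnn: False
    define c' where "c' = c(m := c m + w)"
    have c'R: "\<forall>i\<le>m. c' i \<in> R" unfolding c'_def using cR wR sr(3)[OF R_sr] by simp
    have "(\<Sum>i\<le>m. c' i * u ^ i) = (\<Sum>i<m. c' i * u ^ i) + c' m * u ^ m" by (simp add: lessThan_Suc_atMost[symmetric])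
    also have "(\<Sum>i<m. c' i * u ^ i) = (\<Sum>i<m. c i * u ^ i)" unfolding c'_def by (intro sum.cong) auto
    also have "c' m * u ^ m = c m * u ^ m + cn * u ^ Suc m" unfolding c'_def w_def by (simp add: algebra_simps)
    finally have "(\<Sum>i\<le>m. c' i * u ^ i) = (\<Sum>i\<le>Suc m. c i * u ^ i)"
      unfolding sumS by (simp add: lessThan_Suc_atMost[symmetric])
    then have c'sum: "(\<Sum>i\<le>m. c' i * u ^ i) = 0" using Suc.prems(3) by simp
    show ?thesis
    proof (cases "\<exists>i\<le>m. lunit (c' i)")
      case True
      show ?thesis using Suc.IH[OF c'R True c'sum] .
    next
      case False
      obtain i where i: "i \<le> Suc m" "lunit (c i)" using Suc.prems(2) by blast
      have "i \<noteq> Suc m" using i cnn unfolding cn_def by auto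
      moreover have "\<not> i < m"
      proof
        assume "i < m"
        then have "c' i = c i" unfolding c'_def by simp
        then show False using False i \<open>i < m\<close> by (metis less_imp_le)
      qed
      ultimately have "i = m" using i by simp
      then have cmu: "lunit (c m)" using i by simp
      have "\<not> lunit (c m + w)" using False unfolding c'_def by auto
      then have wu: "lunit w" using unit_add[OF cmu wR] by blast
      then have "cn \<noteq> 0" "u \<noteq> 0" unfolding lunit_def w_def by auto
      then have "inverse u = cn * inverse w" unfolding w_def by (simp add: field_simps)
      then show ?thesis using cnR wu sr(5)[OF R_sr] unfolding lunit_def by simp
    qed
  qed
qed

end



lemma val_min: assumes W: "valuation_domain W K" and K: "subfield K" and fK: "\<forall>i. f i \<in> K"
  shows "(\<exists>i\<le>(n::nat). f i \<noteq> 0) \<Longrightarrow> \<exists>k\<le>n. f k \<noteq> 0 \<and> (\<forall>i\<le>n. f i / f k \<in> W)"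
proof (induction n)
  case 0
  have "1 \<in> W" using W unfolding valuation_domain_def subring_def by auto
  then show ?case using 0 by auto
next
  case (Suc n)
  have Wr: "subring W" and Wv: "\<forall>x\<in>K. x \<noteq> 0 \<longrightarrow> x \<in> W \<or> inverse x \<in> W" using W unfolding valuation_domain_def by auto
  note w = sr[OF Wr]
  show ?case
  proof (cases "\<exists>i\<le>n. f i \<noteq> 0")
    case False
    then have fs: "f (Suc n) \<noteq> 0" using Suc.prems le_Suc_eq by blast
    have "f i / f (Suc n) \<in> W" if "i \<le> Suc n" for i
    proof (cases "i = Suc n")
      case True then show ?thesis using fs w(2) by simp
    next
      case False then have "f i = 0" using \<open>\<not> (\<exists>i\<le>n. f i \<noteq> 0)\<close> that le_Suc_eq by blast
      then show ?thesis using w(1) by simp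
    qed
    then show ?thesis using fs by (intro exI[of _ "Suc n"]) auto
  next
    case True
    then obtain k where k: "k \<le> n" "f k \<noteq> 0" "\<forall>i\<le>n. f i / f k \<in> W" using Suc.IH by blast
    show ?thesis
    proof (cases "f (Suc n) / f k \<in> W")
      case True
      then show ?thesis using k le_Suc_eq by (intro exI[of _ k]) auto
    next
      case False
      have rK: "f (Suc n) / f k \<in> K" using fK sf_div[OF K] by blast
      have "f (Suc n) / f k \<noteq> 0" using False w(1) by auto
      then have inv: "f k / f (Suc n) \<in> W" using Wv rK False by auto
      have fs: "f (Suc n) \<noteq> 0" using \<open>f (Suc n) / f k \<noteq> 0\<close> by auto
      have "f i / f (Suc n) \<in> W" if "i \<le> Suc n" for i
      proof (cases "i = Suc n")
        case True then show ?thesis using fs w(2) by simp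
      next
        case False
        then have "i \<le> n" using that by simp
        have eq: "f i / f (Suc n) = (f i / f k) * (f k / f (Suc n))" using k(2) by simp
        show ?thesis unfolding eq by (rule w(5)[OF k(3)[rule_format, OF \<open>i \<le> n\<close>] inv])
      qed
      then show ?thesis using fs by (intro exI[of _ "Suc n"]) auto
    qed
  qed
qed

lemma clear_denom: assumes qf: "quotient_field A K"
  shows "(\<forall>i. coeff p i \<in> K) \<Longrightarrow> \<exists>d\<in>A. d \<noteq> 0 \<and> (\<forall>i. d * coeff p i \<in> A)"
proof (induction p)
  case 0 then show ?case using sr(1,2)[OF qf_sr[OF qf]] by (intro bexI[of _ 1]) auto
next
  case (pCons a h)
  have "\<forall>i. coeff h i \<in> K" using pCons.prems coeff_pCons_Suc by metis
  then obtain d where d: "d \<in> A" "d \<noteq> 0" "\<forall>i. d * coeff h i \<in> A" using pCons.IH by blast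
  have "a \<in> K" using pCons.prems coeff_pCons_0 by metis
  then obtain e f where ef: "e \<in> A" "f \<in> A" "f \<noteq> 0" "a = e / f" using qf_elem[OF qf] by blast
  have "d * f * coeff (pCons a h) i \<in> A" for i
  proof (cases i)
    case 0
    then have eq: "d * f * coeff (pCons a h) i = d * e" using ef by simp
    have "d * e \<in> A" using sr(5)[OF qf_sr[OF qf]] d ef by simp
    then show ?thesis by (simp only: eq)
  next
    case (Suc j)
    then have eq: "d * f * coeff (pCons a h) i = f * (d * coeff h j)" by (simp add: ac_simps)
    have "f * (d * coeff h j) \<in> A" using sr(5)[OF qf_sr[OF qf]] d ef by simp
    then show ?thesis by (simp only: eq)
  qed
  then show ?case using d ef sr(5)[OF qf_sr[OF qf]] by (intro bexI[of _ "d * f"]) auto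
qed

lemma poly_in: assumes "subring B" "x \<in> B" shows "(\<forall>i. coeff h i \<in> B) \<Longrightarrow> poly h x \<in> B"
proof (induction h)
  case 0 then show ?case using sr(1)[OF assms(1)] by simp
next
  case (pCons a h)
  have "\<forall>i. coeff h i \<in> B" using pCons.prems coeff_pCons_Suc by metis
  moreover have "a \<in> B" using pCons.prems coeff_pCons_0 by metis
  ultimately show ?case using pCons.IH sr(3,5)[OF assms(1)] assms(2) by simp
qed

lemma contract: assumes A: "subring A" and B: "subring B" and AB: "A \<subseteq> B" and x: "x \<in> B" "x \<noteq> 0"
  shows "g \<noteq> 0 \<Longrightarrow> (\<forall>i. coeff g i \<in> A) \<Longrightarrow> poly g x = 0 \<Longrightarrow> \<exists>a\<in>A. a \<noteq> 0 \<and> (\<exists>b\<in>B. a = x * b)"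
proof (induction g)
  case 0 then show ?case by simp
next
  case (pCons a h)
  have hA: "\<forall>i. coeff h i \<in> A" using pCons.prems coeff_pCons_Suc by metis
  have aA: "a \<in> A" using pCons.prems coeff_pCons_0 by metis
  show ?case
  proof (cases "a = 0")
    case True
    then have "h \<noteq> 0" "poly h x = 0" using pCons.prems x by auto
    then show ?thesis using pCons.IH hA by blast
  next
    case False
    have "poly h x \<in> B" using poly_in[OF B x(1)] hA AB by blast
    moreover have "a = x * (- poly h x)" using pCons.prems(3) by (simp add: algebra_simps eq_neg_iff_add_eq_0)
    ultimately show ?thesis using aA False sr_uminus[OF B] by blast
  qed
qed



theorem corollary2p11:
  fixes K L A B :: "'a::field set" and \<V> :: "'a set set"
  assumes "algebraic_ext K L"
    and "PvMD A K"
    and "quotient_field B L"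
    and "A \<subseteq> B"
    and "integrally_closed B L"
    and "essential_domain B L"
    and "essential_representation B L \<V>"
    and "\<forall>V\<in>\<V>. t_ideal A K (max_ideal_val V \<inter> A)"
  shows "PvMD B L"
proof -
  note alg = assms(1) and pvA = assms(2) and qfB = assms(3) and AB = assms(4) and ic = assms(5)
    and er = assms(7) and cen = assms(8)
  have qfA: "quotient_field A K" using pvA unfolding PvMD_def by blast
  have pvA2: "\<And>Q. t_maximal A K Q \<Longrightarrow> valuation_domain (localization A Q) K" using pvA unfolding PvMD_def by blast
  have Ksf: "subfield K" and Lsf: "subfield L" and KL: "K \<subseteq> L"
    and algx: "\<And>x. x \<in> L \<Longrightarrow> \<exists>p. p \<noteq> 0 \<and> (\<forall>i. coeff p i \<in> K) \<and> poly p x = 0"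
    using alg unfolding algebraic_ext_def by auto
  have RA: "subring A" using qf_sr[OF qfA] .
  have RBB: "subring B" using qf_sr[OF qfB] .
  have AK: "A \<subseteq> K" using qf_sub[OF qfA] .
  have BLs: "B \<subseteq> L" using qf_sub[OF qfB] .
  have Vv: "valuation_domain V L \<and> B \<subseteq> V" if "V \<in> \<V>" for V
  proof -
    have "essential_valuation_overring B L V" using er that unfolding essential_representation_def by blast
    then have "valuation_overring B L V" unfolding essential_valuation_overring_def by blast
    then show ?thesis unfolding valuation_overring_def by blast
  qed
  have Binter: "L \<inter> \<Inter>\<V> = B" using er unfolding essential_representation_def by blast
  have "valuation_domain (localization B M) L" if tm: "t_maximal B L M" for M
  proof -
    have prM: "prime_ideal_of B M" by (rule tmax_prime[OF qfB tm])
    interpret locB B L M using qfB prM by unfold_locales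
    have Mi: "ideal_of B M" "t_ideal B L M" using tm unfolding t_maximal_def by auto
    note mo = ideal_ops[OF Mi(1)]
    have dich: "x \<in> R \<or> inverse x \<in> R" if xL: "x \<in> L" and x0: "x \<noteq> 0" for x
    proof (cases "M = {0}")
      case True
      obtain a b where "a \<in> B" "b \<in> B" "b \<noteq> 0" "x = a / b" using qf_elem[OF qfB xL] by blast
      then have "x \<in> R" unfolding Rmem using True by blast
      then show ?thesis by blast
    next
      case Mne: False
      obtain x0 where x0: "x0 \<in> M" "x0 \<noteq> 0" using Mne mo(1) by blast
      have x0B: "x0 \<in> B" using x0 mo(4) by blast
      obtain p where p: "p \<noteq> 0" "\<forall>i. coeff p i \<in> K" "poly p x0 = 0" using algx[of x0] x0B BLs by blast
      obtain d where d: "d \<in> A" "d \<noteq> 0" "\<forall>i. d * coeff p i \<in> A" using clear_denom[OF qfA p(2)] by blast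
      have sd: "smult d p \<noteq> 0" "\<forall>i. coeff (smult d p) i \<in> A" "poly (smult d p) x0 = 0" using p d by auto
      have "\<exists>a\<in>A. a \<noteq> 0 \<and> (\<exists>b\<in>B. a = x0 * b)"
        by (rule contract[OF RA RBB AB x0B x0(2) sd])
      then obtain a b where ab: "a \<in> A" "a \<noteq> 0" "b \<in> B" "a = x0 * b" by blast
      have "a \<in> M" using mo(3)[OF ab(3) x0(1)] ab(4) by (simp add: mult.commute)
      define q where "q = M \<inter> A"
      have qne: "q \<noteq> {0}" using ab \<open>a \<in> M\<close> unfolding q_def by blast
      have qid: "ideal_of A q" unfolding ideal_of_def
      proof (intro conjI ballI)
        show "q \<subseteq> A" "0 \<in> q" unfolding q_def using mo(1) sr(1)[OF RA] by auto
        fix u v assume "u \<in> q" "v \<in> q"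
        then show "u + v \<in> q" unfolding q_def using mo(2) sr(3)[OF RA] by blast
      next
        fix e u assume "e \<in> A" "u \<in> q"
        moreover have "e \<in> B" using \<open>e \<in> A\<close> AB by blast
        ultimately show "e * u \<in> q" unfolding q_def using mo(3) sr(5)[OF RA] by blast
      qed
      show ?thesis
      proof (cases "1 \<in> t_closure A K q")
        case True
        have qK: "q \<subseteq> K" using AK unfolding q_def by blast
        obtain S where S: "finite S" "S \<noteq> {}" "S \<subseteq> q - {0}" "1 \<in> cc A K S"
          using iffD1[OF tcl_iff[OF qfA qK] True] by blast
        have SA: "S \<subseteq> A" using S(3) unfolding q_def by blast
        have "1 \<in> cc B L S" unfolding one_cc_iff
        proof (intro conjI ballI impI)
          show "1 \<in> L" using sr(2)[OF sf_sr[OF Lsf]] .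
          fix y assume y: "y \<in> L" "\<forall>s\<in>S. y * s \<in> B"
          have "y \<in> V" if V: "V \<in> \<V>" for V
          proof (rule ccontr)
            assume yV: "y \<notin> V"
            have vd: "valuation_domain V L" and BV: "B \<subseteq> V" using Vv[OF V] by auto
            have VR: "subring V" and Vdich: "\<forall>x\<in>L. x \<noteq> 0 \<longrightarrow> x \<in> V \<or> inverse x \<in> V"
              using vd unfolding valuation_domain_def by auto
            have "y \<noteq> 0" using yV sr(1)[OF VR] by auto
            then have iy: "inverse y \<in> V" using Vdich y(1) yV by blast
            define P where "P = max_ideal_val V \<inter> A"
            have SP: "S \<subseteq> P - {0}"
            proof
              fix s assume s: "s \<in> S"
              have s0: "s \<noteq> 0" using s S(3) by blast
              have ysV: "y * s \<in> V" using y(2) s BV by blast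
              have eqs: "s = (y * s) * inverse y" using \<open>y \<noteq> 0\<close> by simp
              have sV: "s \<in> V" by (subst eqs) (rule sr(5)[OF VR ysV iy])
              have "inverse s \<notin> V"
              proof
                assume "inverse s \<in> V"
                moreover have "y = (y * s) * inverse s" using s0 by simp
                ultimately show False using sr(5)[OF VR ysV] yV by metis
              qed
              then show "s \<in> P - {0}" unfolding P_def max_ideal_val_def using sV s0 s SA by blast
            qed
            have tP: "t_ideal A K P" using cen V unfolding P_def by blast
            have "P \<noteq> {0}" using SP S(2) by blast
            then have tcP: "t_closure A K P = P" using tideal_closed[OF tP] by blast
            have PK: "P \<subseteq> K" unfolding P_def using AK by blast
            have "1 \<in> t_closure A K P" using S SP by (intro iffD2[OF tcl_iff[OF qfA PK]] exI[of _ S]) auto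
            then have "1 \<in> max_ideal_val V" using tcP unfolding P_def by blast
            then show False using sr(2)[OF VR] unfolding max_ideal_val_def by simp
          qed
          then show "y \<in> B" using Binter y(1) by blast
        qed
        moreover have "S \<subseteq> M - {0}" using S(3) unfolding q_def by blast
        moreover have MLs: "M \<subseteq> L" using mo(4) BLs by blast
        ultimately have "1 \<in> t_closure B L M" using S(1,2) by (intro iffD2[OF tcl_iff[OF qfB MLs]] exI[of _ S]) auto
        then have "1 \<in> M" using tideal_closed[OF Mi(2) Mne] by simp
        then show ?thesis using oneM by blast
      next
        case False
        obtain Q where Q: "t_maximal A K Q" "q \<subseteq> Q" using exists_tmax[OF qfA qid qne False] by blast
        have WV: "valuation_domain (localization A Q) K" by (rule pvA2[OF Q(1)])
        have WR: "localization A Q \<subseteq> R"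
        proof
          fix z assume "z \<in> localization A Q"
          then obtain a s where as: "a \<in> A" "s \<in> A" "s \<notin> Q" "z = a / s" unfolding localization_def by blast
          have "s \<notin> M" using as Q(2) unfolding q_def by blast
          then show "z \<in> R" unfolding Rmem using as AB by blast
        qed
        obtain p where p: "p \<noteq> 0" "\<forall>i. coeff p i \<in> K" "poly p x = 0" using algx[OF xL] by blast
        have "\<exists>i\<le>degree p. coeff p i \<noteq> 0" using p(1) by (intro exI[of _ "degree p"]) simp
        then obtain k where k: "k \<le> degree p" "coeff p k \<noteq> 0" "\<forall>i\<le>degree p. coeff p i / coeff p k \<in> localization A Q"
          using val_min[OF WV Ksf p(2)] by blast
        define c where "c i = coeff p i / coeff p k" for i
        have cR: "\<forall>i\<le>degree p. c i \<in> R" using k(3) WR unfolding c_def by blast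
        have "c k = 1" unfolding c_def using k(2) by simp
        then have "lunit (c k)" unfolding lunit_def using sr(2)[OF R_sr] by simp
        then have cu: "\<exists>i\<le>degree p. lunit (c i)" using k(1) by blast
        have "(\<Sum>i\<le>degree p. c i * x ^ i) = (\<Sum>i\<le>degree p. coeff p i * x ^ i) / coeff p k"
          unfolding c_def by (simp add: sum_divide_distrib)
        also have "\<dots> = 0" using p(3) by (simp add: poly_altdef)
        finally show ?thesis using local_root[OF ic xL cR cu] by blast
      qed
    qed
    show ?thesis unfolding valuation_domain_def using R_sr R_L dich by blast
  qed
  then show ?thesis unfolding PvMD_def using qfB by blast
qed

end
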